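(* Consider the job set $J$ described in the context with $p_\ell$ sufficiently large. Let $j\in\{3,\dots,n\}$ and let $\sigma=(M_1,M_2)$ be a schedule of $J$ with $\omega_j(\sigma)=0$, $\omega_i(\sigma)=1$ for all $i\in\{1,\dots,j-1\}$, and $\ell\in M_1$. Then $\sigma$ can be improved, by a sequence of improving 3-swaps, to a schedule with $\omega_j=1$ and $\omega_i=0$ for all $i\in\{1,\dots,j-1\}$.
   Context: Two identical machines; a schedule $\sigma=(M_1,M_2)$ partitions the jobs into sets processed on machines 1 and 2, with loads $L_i=\sum_{j\in M_i}p_j$ and makespan $\max_iL_i$. Fix $n\ge3$ and the job set $J=\{a_i,b_i,c_i:1\le i\le n\}\cup\{\ell\}$ with $p_{a_i}=2^{n+i+1}+2^{i-1}$, $p_{b_i}=2^{n+i}$, $p_{c_i}=2^{n+i-1}+2^{i-1}$, and $p_\ell$ a sufficiently large number. For each $i$ define $\omega_i(\sigma)=0$ if $a_i\in M_1$ and $b_i,c_i\in M_2$; $\omega_i(\sigma)=1$ if $a_i\in M_2$ and $b_i,c_i\in M_1$; and $\omega_i(\sigma)=-1$ otherwise. A 3-swap interchanges the machine assignments of exactly three jobs (some on each machine); it is improving if the makespan strictly decreases. *)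

theory Defs
  imports Main
begin

datatype job = A nat | B nat | C nat | L

definition jobs :: "nat \<Rightarrow> job set" where
  "jobs n = {A i | i. 1 \<le> i \<and> i \<le> n} \<union> {B i | i. 1 \<le> i \<and> i \<le> n}
            \<union> {C i | i. 1 \<le> i \<and> i \<le> n} \<union> {L}"

fun ptime :: "nat \<Rightarrow> nat \<Rightarrow> job \<Rightarrow> nat" where
  "ptime n pl (A i) = 2 ^ (n + i + 1) + 2 ^ (i - 1)"
| "ptime n pl (B i) = 2 ^ (n + i)"
| "ptime n pl (C i) = 2 ^ (n + i - 1) + 2 ^ (i - 1)"
| "ptime n pl L = pl"

text \<open>A schedule is represented by the set M1 \<subseteq> jobs n of jobs on machine 1;
  machine 2 gets M2 = jobs n - M1.\<close>
definition load :: "nat \<Rightarrow> nat \<Rightarrow> job set \<Rightarrow> nat" where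
  "load n pl M = (\<Sum>x\<in>M. ptime n pl x)"

definition makespan :: "nat \<Rightarrow> nat \<Rightarrow> job set \<Rightarrow> nat" where
  "makespan n pl M1 = max (load n pl M1) (load n pl (jobs n - M1))"

definition omega :: "nat \<Rightarrow> job set \<Rightarrow> nat \<Rightarrow> int" where
  "omega n M1 i =
     (if A i \<in> M1 \<and> B i \<in> jobs n - M1 \<and> C i \<in> jobs n - M1 then 0
      else if A i \<in> jobs n - M1 \<and> B i \<in> M1 \<and> C i \<in> M1 then 1
      else -1)"

definition three_swap :: "nat \<Rightarrow> job set \<Rightarrow> job set \<Rightarrow> bool" where
  "three_swap n M1 M1' \<longleftrightarrow> (\<exists>S. S \<subseteq> jobs n \<and> card S = 3 \<and> S \<inter> M1 \<noteq> {}
       \<and> S \<inter> (jobs n - M1) \<noteq> {} \<and> M1' = (M1 - S) \<union> (S \<inter> (jobs n - M1)))"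

definition improving_3swap :: "nat \<Rightarrow> nat \<Rightarrow> job set \<Rightarrow> job set \<Rightarrow> bool" where
  "improving_3swap n pl M1 M1' \<longleftrightarrow>
     three_swap n M1 M1' \<and> makespan n pl M1' < makespan n pl M1"

end

theory Submission
  imports Defs
begin

lemma jobs_eq: "jobs n = A ` {1..n} \<union> B ` {1..n} \<union> C ` {1..n} \<union> {L}"
  unfolding jobs_def by auto

lemma finite_jobs[simp]: "finite (jobs n)"
  unfolding jobs_eq by simp

lemma jobs_mem[simp]:
  "A i \<in> jobs n \<longleftrightarrow> 1 \<le> i \<and> i \<le> n"
  "B i \<in> jobs n \<longleftrightarrow> 1 \<le> i \<and> i \<le> n"
  "C i \<in> jobs n \<longleftrightarrow> 1 \<le> i \<and> i \<le> n"
  "L \<in> jobs n"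
  unfolding jobs_def by auto

lemma ptime_nonL: "x \<noteq> L \<Longrightarrow> ptime n pl x = ptime n 0 x"
  by (cases x) auto

lemma load_nonL: "L \<notin> M \<Longrightarrow> load n pl M = load n 0 M"
  unfolding load_def by (rule sum.cong) (auto intro: ptime_nonL)

lemma makespan_eq:
  assumes "M \<subseteq> jobs n" "L \<in> M" "pl \<ge> load n 0 (jobs n)"
  shows "makespan n pl M = load n pl M"
proof -
  have fM: "finite M" using finite_subset[OF assms(1)] by simp
  have "load n pl (jobs n - M) = load n 0 (jobs n - M)"
    using assms(2) by (intro load_nonL) auto
  also have "\<dots> \<le> load n 0 (jobs n)"
    unfolding load_def by (rule sum_mono2) auto
  also have "\<dots> \<le> pl" by fact
  also have "pl \<le> load n pl M"
    unfolding load_def using member_le_sum[OF assms(2) _ fM, of "ptime n pl"] by simp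
  finally show ?thesis unfolding makespan_def by simp
qed

lemma swap_out2:
  assumes M: "M \<subseteq> jobs n" "L \<in> M" "pl \<ge> load n 0 (jobs n)"
    and xy: "x \<in> M" "y \<in> M" "z \<in> jobs n" "z \<notin> M" "x \<noteq> y" "x \<noteq> L" "y \<noteq> L"
    and lt: "ptime n pl z < ptime n pl x + ptime n pl y"
  shows "improving_3swap n pl M (M - {x, y} \<union> {z})"
proof -
  have fM: "finite M" using finite_subset[OF M(1)] by simp
  have ts: "three_swap n M (M - {x, y} \<union> {z})"
    unfolding three_swap_def
  proof (intro exI[of _ "{x,y,z}"] conjI)
    show "{x, y, z} \<subseteq> jobs n" using xy M by auto
    show "card {x, y, z} = 3" using xy by (auto simp: card_insert_if)
    show "{x, y, z} \<inter> M \<noteq> {}" using xy by auto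
    show "{x, y, z} \<inter> (jobs n - M) \<noteq> {}" using xy by auto
    show "M - {x, y} \<union> {z} = M - {x, y, z} \<union> {x, y, z} \<inter> (jobs n - M)" using xy by auto
  qed
  have e1: "load n pl M = load n pl (M - {x, y}) + ptime n pl x + ptime n pl y"
  proof -
    have "M = insert x (insert y (M - {x,y}))" using xy by auto
    then have "load n pl M = load n pl (insert x (insert y (M - {x,y})))" by simp
    also have "\<dots> = load n pl (M - {x, y}) + ptime n pl x + ptime n pl y"
      unfolding load_def using fM xy by (simp add: sum.insert)
    finally show ?thesis .
  qed
  have e2: "load n pl (M - {x, y} \<union> {z}) = load n pl (M - {x, y}) + ptime n pl z"
    unfolding load_def using fM xy by simp
  have m1: "makespan n pl M = load n pl M" using makespan_eq M by blast
  have m2: "makespan n pl (M - {x, y} \<union> {z}) = load n pl (M - {x, y} \<union> {z})"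
    using M xy by (intro makespan_eq) auto
  show ?thesis unfolding improving_3swap_def using ts m1 m2 e1 e2 lt by simp
qed

lemma swap_out1:
  assumes M: "M \<subseteq> jobs n" "L \<in> M" "pl \<ge> load n 0 (jobs n)"
    and xy: "x \<in> M" "y \<in> jobs n" "y \<notin> M" "z \<in> jobs n" "z \<notin> M" "y \<noteq> z" "x \<noteq> L"
    and lt: "ptime n pl y + ptime n pl z < ptime n pl x"
  shows "improving_3swap n pl M (M - {x} \<union> {y, z})"
proof -
  have fM: "finite M" using finite_subset[OF M(1)] by simp
  have ts: "three_swap n M (M - {x} \<union> {y, z})"
    unfolding three_swap_def
  proof (intro exI[of _ "{x,y,z}"] conjI)
    show "{x, y, z} \<subseteq> jobs n" using xy M by auto
    show "card {x, y, z} = 3" using xy by (auto simp: card_insert_if)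
    show "{x, y, z} \<inter> M \<noteq> {}" using xy by auto
    show "{x, y, z} \<inter> (jobs n - M) \<noteq> {}" using xy by auto
    show "M - {x} \<union> {y, z} = M - {x, y, z} \<union> {x, y, z} \<inter> (jobs n - M)" using xy by auto
  qed
  have e1: "load n pl M = load n pl (M - {x}) + ptime n pl x"
    unfolding load_def using sum.remove[OF fM xy(1), of "ptime n pl"] by simp
  have e2: "load n pl (M - {x} \<union> {y, z}) = load n pl (M - {x}) + ptime n pl y + ptime n pl z"
    unfolding load_def using fM xy by simp
  have m1: "makespan n pl M = load n pl M" using makespan_eq M by blast
  have m2: "makespan n pl (M - {x} \<union> {y, z}) = load n pl (M - {x} \<union> {y, z})"
    using M xy by (intro makespan_eq) auto
  show ?thesis unfolding improving_3swap_def using ts m1 m2 e1 e2 lt by simp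
qed

lemma ineq1: "ptime n pl (A 1) < ptime n pl (B 1) + ptime n pl (C 2)"
proof -
  have "(2::nat)^(n+1+1) = 2 * 2^(n+1)" by simp
  then show ?thesis by simp
qed

lemma ineq2:
  assumes "2 \<le> j" "j \<le> n"
  shows "ptime n pl (C j) < ptime n pl (C 1) + ptime n pl (B (j - 1))"
proof -
  have a: "(2::nat) ^ (j - 1) < 2 ^ n" using assms by (intro power_strict_increasing) auto
  have b: "n + j - 1 = n + (j - 1)" using assms by simp
  have "ptime n pl (C j) = 2 ^ (n + (j - 1)) + 2 ^ (j - 1)" using b by simp
  moreover have "ptime n pl (C 1) + ptime n pl (B (j - 1)) = 2^n + 1 + 2 ^ (n + (j - 1))" by simp
  ultimately show ?thesis using a by linarith
qed

lemma ineq3: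
  assumes "1 \<le> i"
  shows "ptime n pl (A i) < ptime n pl (B i) + ptime n pl (C (i + 1))"
proof -
  obtain k where k: "i = Suc k" using assms by (cases i) auto
  have "ptime n pl (A i) = 2 * 2^(n+i) + 2^k" using k by simp
  moreover have "ptime n pl (B i) + ptime n pl (C (i + 1)) = 2^(n+i) + 2^(n+i) + 2 * 2^k"
    using k by simp
  moreover have "(0::nat) < 2^k" by simp
  ultimately show ?thesis by linarith
qed

lemma ineq4:
  assumes "2 \<le> j"
  shows "ptime n pl (B j) + ptime n pl (A (j - 1)) < ptime n pl (A j)"
proof -
  obtain k where k: "j = Suc (Suc k)" using assms by (metis add_2_eq_Suc le_Suc_ex)
  have "ptime n pl (A j) = 2 * 2^(n+j) + 2 * 2^k" using k by simp
  moreover have "ptime n pl (B j) + ptime n pl (A (j - 1)) = 2^(n+j) + 2^(n+j) + 2^k"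
    using k by simp
  moreover have "(0::nat) < 2^k" by simp
  ultimately show ?thesis by linarith
qed
theorem lemma9:
  fixes n :: nat
  assumes "n \<ge> 3"
  shows "\<exists>P0. \<forall>pl \<ge> P0. \<forall>j M1.
           3 \<le> j \<and> j \<le> n \<and> M1 \<subseteq> jobs n \<and> L \<in> M1
           \<and> omega n M1 j = 0 \<and> (\<forall>i\<in>{1..<j}. omega n M1 i = 1)
           \<longrightarrow> (\<exists>M1'. (improving_3swap n pl)\<^sup>*\<^sup>* M1 M1'
                  \<and> omega n M1' j = 1 \<and> (\<forall>i\<in>{1..<j}. omega n M1' i = 0))"
proof (intro exI[of _ "load n 0 (jobs n)"] allI impI)
  fix pl j M1
  assume pl: "load n 0 (jobs n) \<le> pl"
  assume H: "3 \<le> j \<and> j \<le> n \<and> M1 \<subseteq> jobs n \<and> L \<in> M1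
           \<and> omega n M1 j = 0 \<and> (\<forall>i\<in>{1..<j}. omega n M1 i = 1)"
  then have j: "3 \<le> j" "j \<le> n" and M1: "M1 \<subseteq> jobs n" "L \<in> M1" by auto
  have hj: "A j \<in> M1" "B j \<notin> M1" "C j \<notin> M1"
    using H unfolding omega_def by (auto split: if_splits)
  have hi: "\<And>i. 1 \<le> i \<Longrightarrow> i < j \<Longrightarrow> A i \<notin> M1 \<and> B i \<in> M1 \<and> C i \<in> M1"
  proof -
    fix i assume "1 \<le> i" "i < j"
    then have "omega n M1 i = 1" using H by auto
    then show "A i \<notin> M1 \<and> B i \<in> M1 \<and> C i \<in> M1"
      unfolding omega_def by (auto split: if_splits)
  qed
  define R where "R k = {B 1, C 2, C 1, B (j-1)} \<union> {B i | i. 2 \<le> i \<and> i \<le> k}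
      \<union> {C (i+1) | i. 2 \<le> i \<and> i \<le> k}" for k
  define Ad where "Ad k = {A 1, C j} \<union> {A i | i. 2 \<le> i \<and> i \<le> k}" for k
  define Mk where "Mk k = M1 - R k \<union> Ad k" for k
  let ?r = "improving_3swap n pl"
  have Mk_sub: "Mk k \<subseteq> jobs n" if "k \<le> j - 2" for k
    using M1 j that unfolding Mk_def Ad_def by auto
  have Mk_L: "L \<in> Mk k" for k
    using M1 unfolding Mk_def R_def by auto
  have base: "?r\<^sup>*\<^sup>* M1 (Mk 1)"
  proof -
    define Ma where "Ma = M1 - {B 1, C 2} \<union> {A 1}"
    have s1: "?r M1 Ma"
      unfolding Ma_def using hi[of 1] hi[of 2] j
      by (intro swap_out2[OF M1 pl] ineq1) auto
    have Ma_sub: "Ma \<subseteq> jobs n" using M1 j unfolding Ma_def by auto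
    have s2: "?r Ma (Ma - {C 1, B (j-1)} \<union> {C j})"
      using hi[of 1] hi[of "j-1"] hj j Ma_sub M1 unfolding Ma_def
      by (intro swap_out2 ineq2 pl) auto
    have eq: "Ma - {C 1, B (j-1)} \<union> {C j} = Mk 1"
      unfolding Ma_def Mk_def R_def Ad_def using j by auto
    show ?thesis using s1 s2 eq by auto
  qed
  have ind: "1 \<le> k \<longrightarrow> k \<le> j - 2 \<longrightarrow> ?r\<^sup>*\<^sup>* M1 (Mk k)" for k
  proof (induction k)
    case 0
    then show ?case by simp
  next
    case (Suc k)
    show ?case
    proof (intro impI)
      assume k: "1 \<le> Suc k" "Suc k \<le> j - 2"
      show "?r\<^sup>*\<^sup>* M1 (Mk (Suc k))"
      proof (cases "k = 0")
        case True
        then show ?thesis using base by simp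
      next
        case False
        then have IH: "?r\<^sup>*\<^sup>* M1 (Mk k)" using Suc k by auto
        have s: "?r (Mk k) (Mk k - {B (Suc k), C (Suc k + 1)} \<union> {A (Suc k)})"
        proof (rule swap_out2[OF Mk_sub Mk_L pl])
          show "k \<le> j - 2" using k by simp
          show "B (Suc k) \<in> Mk k" using hi[of "Suc k"] k False
            unfolding Mk_def R_def by auto
          show "C (Suc k + 1) \<in> Mk k" using hi[of "Suc k + 1"] k False
            unfolding Mk_def R_def Ad_def by auto
          show "A (Suc k) \<in> jobs n" using k j by auto
          show "A (Suc k) \<notin> Mk k" using hi[of "Suc k"] k False
            unfolding Mk_def R_def Ad_def by auto
        qed (auto intro: ineq3)
        have eq: "Mk k - {B (Suc k), C (Suc k + 1)} \<union> {A (Suc k)} = Mk (Suc k)"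
          unfolding Mk_def R_def Ad_def using k False by auto
        show ?thesis using IH s eq by auto
      qed
    qed
  qed
  define Mf where "Mf = Mk (j - 2) - {A j} \<union> {A (j - 1), B j}"
  have s: "?r (Mk (j-2)) Mf"
    unfolding Mf_def
  proof (rule swap_out1[OF Mk_sub Mk_L pl])
    show "A j \<in> Mk (j - 2)" using hj j unfolding Mk_def R_def Ad_def by auto
    show "A (j - 1) \<in> jobs n" using j by auto
    show "A (j - 1) \<notin> Mk (j - 2)" using hi[of "j-1"] j unfolding Mk_def R_def Ad_def by auto
    show "B j \<in> jobs n" using j by auto
    show "B j \<notin> Mk (j - 2)" using hj j unfolding Mk_def R_def Ad_def by auto
    show "ptime n pl (A (j - 1)) + ptime n pl (B j) < ptime n pl (A j)"
      using ineq4[of j n pl] j by simp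
  qed auto
  have reach: "?r\<^sup>*\<^sup>* M1 Mf" using ind[of "j-2"] s j by auto
  have Mf_sub: "Mf \<subseteq> jobs n" using Mk_sub[of "j-2"] j unfolding Mf_def by auto
  have oj: "omega n Mf j = 1"
    using hj j unfolding omega_def Mf_def Mk_def R_def Ad_def by auto
  have oi: "omega n Mf i = 0" if "i \<in> {1..<j}" for i
  proof -
    have i: "1 \<le> i" "i < j" using that by auto
    have cR: "C i \<in> R (j-2)"
    proof (cases "i \<le> 2")
      case True then show ?thesis using i unfolding R_def by auto
    next
      case False
      then have "\<exists>k. C i = C (k+1) \<and> 2 \<le> k \<and> k \<le> j-2" using i by (intro exI[of _ "i-1"]) auto
      then show ?thesis unfolding R_def by blast
    qed
    have "A i \<in> Mf" "B i \<notin> Mf"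
      using hi[of i] i j unfolding Mf_def Mk_def R_def Ad_def by auto
    moreover have "C i \<notin> Mf" using cR i j unfolding Mf_def Mk_def Ad_def by auto
    ultimately have "A i \<in> Mf" "B i \<notin> Mf" "C i \<notin> Mf" by auto
    then show ?thesis using i j unfolding omega_def by auto
  qed
  show "\<exists>M1'. ?r\<^sup>*\<^sup>* M1 M1' \<and> omega n M1' j = 1 \<and> (\<forall>i\<in>{1..<j}. omega n M1' i = 0)"
    using reach oj oi by blast
qed

end
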